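(* There are infinitely many positive integers $N$ such that there is exactly one pair $(A,B)$ of antipalindromic numbers with $N=A/B$.
   Context: A positive integer $n$ is antipalindromic if its binary representation $w=w_1\cdots w_L$ (most significant digit first, no leading zeros) has even length $L$ and satisfies $w_i+w_{L+1-i}=1$ for all $i$. *)

theory Defs
  imports Main
begin

fun bin_digits :: "nat \<Rightarrow> nat list" where
  "bin_digits n = (if n = 0 then [] else n mod 2 # bin_digits (n div 2))"

declare bin_digits.simps [simp del]

text \<open>Antipalindromic: binary word of even length L with w_i + w_{L+1-i} = 1.
  The condition is symmetric under reversal, so LSB-first indexing is equivalent.\<close>
definition antipalindromic :: "nat \<Rightarrow> bool" where
  "antipalindromic n \<longleftrightarrow> n > 0 \<and>
     (let w = rev (bin_digits n); L = length w in
        even L \<and> (\<forall>i < L. w ! i + w ! (L - 1 - i) = 1))"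

end

theory Submission imports Defs begin
lemma bd0: "bin_digits 0 = []" by (subst bin_digits.simps) simp
lemma bdS: "n \<noteq> 0 \<Longrightarrow> bin_digits n = n mod 2 # bin_digits (n div 2)"
  by (subst bin_digits.simps) simp

lemma bd_len: "n < 2 ^ length (bin_digits n)"
proof (induction n rule: bin_digits.induct)
  case (1 n)
  show ?case
  proof (cases "n = 0")
    case True then show ?thesis by (simp add: bd0)
  next
    case False
    then show ?thesis using 1 bdS[OF False] by auto
  qed
qed

lemma bd_len2: "n > 0 \<Longrightarrow> 2 ^ (length (bin_digits n) - 1) \<le> n"
proof (induction n rule: bin_digits.induct)
  case (1 n)
  then have e: "bin_digits n = n mod 2 # bin_digits (n div 2)" by (simp add: bdS)
  show ?case
  proof (cases "n div 2 = 0")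
    case True then show ?thesis using e 1 by (simp add: bd0)
  next
    case False
    then have h: "2 ^ (length (bin_digits (n div 2)) - 1) \<le> n div 2" using 1 by auto
    have "length (bin_digits (n div 2)) \<ge> 1"
      using False by (simp add: bdS)
    then have "(2::nat) ^ length (bin_digits (n div 2)) = 2 * 2 ^ (length (bin_digits (n div 2)) - 1)"
      by (metis Suc_diff_1 less_le_trans power_Suc zero_less_one)
    then have "2 ^ length (bin_digits (n div 2)) \<le> 2 * (n div 2)" using h by simp
    then show ?thesis using e by simp
  qed
qed

lemma bd_nth: "i < length (bin_digits n) \<Longrightarrow> bin_digits n ! i = n div 2^i mod 2"
proof (induction n arbitrary: i rule: bin_digits.induct)
  case (1 n)
  then have nz: "n \<noteq> 0" by (cases "n = 0") (auto simp: bd0)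
  then have e: "bin_digits n = n mod 2 # bin_digits (n div 2)" by (simp add: bdS)
  show ?case
  proof (cases i)
    case 0 then show ?thesis using e by simp
  next
    case (Suc j)
    then have "bin_digits (n div 2) ! j = n div 2 div 2^j mod 2" using 1 nz e by auto
    then show ?thesis using e Suc by (simp add: div_mult2_eq)
  qed
qed

lemma l8: "(r::nat) < 8 \<Longrightarrow> r = 0 \<or> r = 1 \<or> r = 2 \<or> r = 3 \<or> r = 4 \<or> r = 5 \<or> r = 6 \<or> r = 7"
  by (simp add: numeral_eq_Suc less_Suc_eq)

lemma m5: "even (B::nat) \<Longrightarrow> (5 * (B mod 8)) mod 8 = B mod 8"
proof -
  assume e: "even B"
  have "even (B mod 8)" using e by (intro dvd_mod) auto
  moreover have "B mod 8 < 8" by simp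
  ultimately show ?thesis using l8[of "B mod 8"] by auto
qed

lemma d2: "(X::nat) div 2 mod 2 = X mod 8 div 2 mod 2"
proof -
  have "X = 8 * (X div 8) + X mod 8" by simp
  then have "X div 2 = 4 * (X div 8) + X mod 8 div 2" by linarith
  moreover have "\<And>q s::nat. (4 * q + s) mod 2 = s mod 2" by presburger
  ultimately show ?thesis by simp
qed

lemma d4: "(X::nat) div 4 mod 2 = X mod 8 div 4 mod 2"
proof -
  have "X = 8 * (X div 8) + X mod 8" by simp
  then have "X div 4 = 2 * (X div 8) + X mod 8 div 4" by linarith
  then show ?thesis by simp
qed

lemma n5: "16 dvd (3 * N + 1) \<Longrightarrow> (N::nat) mod 8 = 5" by presburger

lemma csl: "even (LA::nat) \<Longrightarrow> even (LB::nat) \<Longrightarrow> LA \<ge> 4 \<Longrightarrow> LB \<ge> 4 \<Longrightarrow>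
   LA - 3 \<ge> LB - 3 + 2*k \<or> LA - 3 + 2 = LB - 3 + 2*k \<or> LA - 3 + 4 \<le> LB - 3 + 2*k"
proof -
  assume "even LA" "even LB" "LA \<ge> 4" "LB \<ge> 4"
  then obtain a b where a: "LA = 2*a" and b: "LB = 2*b" by (auto elim!: evenE)
  have "a \<ge> b + k \<or> a + 1 = b + k \<or> a + 2 \<le> b + k" by linarith
  then show ?thesis using a b \<open>LA \<ge> 4\<close> \<open>LB \<ge> 4\<close> by auto
qed

lemma ev2: "even (L::nat) \<Longrightarrow> L \<noteq> 0 \<Longrightarrow> L \<ge> 2" by (auto elim!: evenE)

lemma ev4: "even (L::nat) \<Longrightarrow> L \<ge> 2 \<Longrightarrow> L \<noteq> 2 \<Longrightarrow> L \<ge> 4" by (auto elim!: evenE)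

lemma pm: "i < 2*k \<Longrightarrow> i mod 2 + (2*k-1-i) mod 2 = (1::nat)"
proof -
  assume i: "i < 2*k"
  define j where "j = 2*k-1-i"
  have s: "i + j = 2*k - 1" using i unfolding j_def by simp
  have o: "odd (2*k - 1)" using i by simp
  have "odd (i + j)" using s o by simp
  then have h: "even i \<longleftrightarrow> odd j" by simp
  show ?thesis
  proof (cases "even i")
    case True
    then have "odd j" using h by simp
    then have "j mod 2 = 1" using odd_iff_mod_2_eq_one by blast
    moreover have "i mod 2 = 0" using True even_iff_mod_2_eq_zero by blast
    ultimately show ?thesis unfolding j_def by simp
  next
    case False
    then have "even j" using h by simp
    then have "j mod 2 = 0" using even_iff_mod_2_eq_zero by blast
    moreover have "i mod 2 = 1" using False odd_iff_mod_2_eq_one by blast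
    ultimately show ?thesis unfolding j_def by simp
  qed
qed

lemma len_unique:
  assumes "2^(L-1) \<le> n" "n < 2^L" "L \<ge> 1"
  shows "length (bin_digits n) = L"
proof -
  let ?M = "length (bin_digits n)"
  have n0: "n > 0" using assms(1) by (metis le_zero_eq not_gr0 power_not_zero zero_neq_numeral)
  have a: "n < 2 ^ ?M" by (rule bd_len)
  have b: "2 ^ (?M - 1) \<le> n" using bd_len2[OF n0] .
  show ?thesis
  proof (rule ccontr)
    assume "?M \<noteq> L"
    then consider "?M < L" | "?M > L" by linarith
    then show False
    proof cases
      case 1
      then have "(2::nat) ^ ?M \<le> 2 ^ (L-1)" by (intro power_increasing) auto
      then show False using a assms(1) by linarith
    next
      case 2
      then have "(2::nat) ^ L \<le> 2 ^ (?M-1)" by (intro power_increasing) auto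
      then show False using b assms(2) by linarith
    qed
  qed
qed

lemma antipal_iff:
  "antipalindromic X \<longleftrightarrow> X > 0 \<and> even (length (bin_digits X)) \<and>
     (\<forall>i < length (bin_digits X). X div 2^i mod 2 + X div 2^(length (bin_digits X) - 1 - i) mod 2 = 1)"
proof -
  let ?d = "bin_digits X"
  let ?L = "length ?d"
  have "(\<forall>i < ?L. rev ?d ! i + rev ?d ! (?L - 1 - i) = 1) \<longleftrightarrow>
        (\<forall>i < ?L. X div 2^i mod 2 + X div 2^(?L - 1 - i) mod 2 = 1)"
  proof
    assume h: "\<forall>i < ?L. rev ?d ! i + rev ?d ! (?L - 1 - i) = 1"
    show "\<forall>i < ?L. X div 2^i mod 2 + X div 2^(?L - 1 - i) mod 2 = 1"
    proof (intro allI impI)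
      fix i assume i: "i < ?L"
      have "rev ?d ! i + rev ?d ! (?L - 1 - i) = 1" using h i by auto
      moreover have "rev ?d ! i = ?d ! (?L - 1 - i)" using i by (simp add: rev_nth)
      moreover have "rev ?d ! (?L - 1 - i) = ?d ! i" using i
        by (simp add: rev_nth Suc_diff_Suc)
      ultimately show "X div 2^i mod 2 + X div 2^(?L - 1 - i) mod 2 = 1"
        using i by (simp add: bd_nth)
    qed
  next
    assume h: "\<forall>i < ?L. X div 2^i mod 2 + X div 2^(?L - 1 - i) mod 2 = 1"
    show "\<forall>i < ?L. rev ?d ! i + rev ?d ! (?L - 1 - i) = 1"
    proof (intro allI impI)
      fix i assume i: "i < ?L"
      have "rev ?d ! i = ?d ! (?L - 1 - i)" using i by (simp add: rev_nth)
      moreover have "rev ?d ! (?L - 1 - i) = ?d ! i" using i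
        by (simp add: rev_nth Suc_diff_Suc)
      ultimately show "rev ?d ! i + rev ?d ! (?L - 1 - i) = 1"
        using i h[rule_format, OF i] by (simp add: bd_nth add.commute)
    qed
  qed
  then show ?thesis unfolding antipalindromic_def Let_def length_rev by blast
qed

lemma antipal_D:
  assumes "antipalindromic X"
  shows "\<exists>L. even L \<and> L \<ge> 2 \<and> 2^(L-1) \<le> X \<and> X < 2^L \<and>
           (\<forall>i<L. X div 2^i mod 2 + X div 2^(L-1-i) mod 2 = 1)"
proof -
  let ?L = "length (bin_digits X)"
  have X0: "X > 0" and ev: "even ?L" and h: "\<forall>i < ?L. X div 2^i mod 2 + X div 2^(?L - 1 - i) mod 2 = 1"
    using assms antipal_iff by auto
  have "?L \<noteq> 0" using X0 bd_len[of X] by (metis less_one not_gr0 power_0)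
  then have "?L \<ge> 2" using ev ev2 by blast
  then show ?thesis using ev h bd_len[of X] bd_len2[OF X0] by blast
qed

lemma antipal_I:
  assumes "even L" "L \<ge> 2" "2^(L-1) \<le> X" "X < 2^L"
    "\<forall>i<L. X div 2^i mod 2 + X div 2^(L-1-i) mod 2 = 1"
  shows "antipalindromic X"
proof -
  have l: "length (bin_digits X) = L" using len_unique assms by auto
  have "X > 0" using assms(3) by (metis le_zero_eq not_gr0 power_not_zero zero_neq_numeral)
  then show ?thesis using antipal_iff l assms by auto
qed

lemma top3:
  fixes X L :: nat
  assumes "X < 2^L" "L \<ge> 3"
  shows "X div 2^(L-3) = 4*(X div 2^(L-1) mod 2) + 2*(X div 2^(L-2) mod 2) + X div 2^(L-3) mod 2"
proof -
  obtain l where L: "L = l + 3" using assms(2) by (metis add.commute le_add_diff_inverse)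
  let ?Y = "X div 2^l"
  have "X < 2^l * 8" using assms(1) L by (simp add: power_add)
  then have Y8: "?Y < 8" by (simp add: div_less_iff_less_mult)
  have "(2::nat)^(L-1) = 2^l * 4" using L by (simp add: power_add)
  then have a: "X div 2^(L-1) = ?Y div 4" by (simp add: div_mult2_eq)
  have "(2::nat)^(L-2) = 2^l * 2" using L by (simp add: power_add)
  then have b: "X div 2^(L-2) = ?Y div 2" by (simp add: div_mult2_eq)
  have c: "X div 2^(L-3) = ?Y" using L by simp
  have g8: "y = 4*(y div 4 mod 2) + 2*(y div 2 mod 2) + y mod 2" if y8: "y < 8" for y :: nat
  proof -
    have "y = 0 \<or> y = 1 \<or> y = 2 \<or> y = 3 \<or> y = 4 \<or> y = 5 \<or> y = 6 \<or> y = 7" using l8[OF y8] .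
    then show ?thesis by (elim disjE) simp_all
  qed
  have "?Y = 4*(?Y div 4 mod 2) + 2*(?Y div 2 mod 2) + ?Y mod 2" using g8[OF Y8] .
  then show ?thesis using a b c by simp
qed


lemma top_bit:
  fixes X L :: nat
  assumes "2^(L-1) \<le> X" "X < 2^L" "L \<ge> 1"
  shows "X div 2^(L-1) mod 2 = 1"
proof -
  have e: "(2::nat)^L = 2^(L-1) * 2" using assms(3)
    by (metis Suc_diff_1 less_le_trans mult.commute power_Suc zero_less_one)
  have "X div 2^(L-1) < 2" using assms(2) e by (simp add: div_less_iff_less_mult)
  moreover have "X div 2^(L-1) \<ge> 1" using assms(1)
    by (simp add: div_greater_zero_iff Suc_le_eq)
  ultimately show ?thesis by simp
qed

lemma cineq:
  fixes c K PA PB A B :: nat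
  assumes c: "4 \<le> c" "c \<le> 7" and K: "K \<ge> 16"
    and B1: "c * PB \<le> B" and B2: "B < (c+1) * PB"
    and A1: "c * PA \<le> A" and A2: "A < (c+1) * PA"
    and eq: "3 * A = (K - 1) * B"
    and cases: "PA \<ge> K * PB \<or> 4 * PA = K * PB \<or> 16 * PA \<le> K * PB"
  shows False
proof -
  have PB0: "PB > 0" using B2 by (cases PB) auto
  have K1: "K - 1 + 1 = K" using K by simp
  consider "PA \<ge> K * PB" | "4 * PA = K * PB" | "16 * PA \<le> K * PB" using cases by blast
  then show False
  proof cases
    case 1
    have "3 * c * (K * PB) \<le> 3 * c * PA" using 1 by simp
    also have "\<dots> \<le> 3 * A" using A1 by simp
    also have "\<dots> = (K - 1) * B" by (rule eq)
    also have "\<dots> \<le> K * B" by simp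
    also have "\<dots> \<le> K * ((c+1) * PB)" using B2 by simp
    finally have "(3 * c) * (K * PB) \<le> (c + 1) * (K * PB)" by (simp add: ac_simps)
    moreover have "K * PB > 0" using PB0 K by simp
    ultimately have "3 * c \<le> c + 1" by simp
    then show False using c by simp
  next
    case 2
    have "(K - 1) * (c * PB) \<le> (K - 1) * B" using B1 by simp
    also have "\<dots> = 3 * A" using eq by simp
    also have "\<dots> < 3 * ((c+1) * PA)" using A2 by simp
    finally have "4 * ((K - 1) * (c * PB)) < 4 * (3 * ((c+1) * PA))" by simp
    also have "\<dots> = 3 * (c+1) * (4 * PA)" by (simp add: algebra_simps)
    also have "\<dots> = (3 * (c+1) * K) * PB" using 2 by (simp add: ac_simps)
    finally have "(4 * (K - 1) * c) * PB < (3 * (c+1) * K) * PB" by (simp add: ac_simps)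
    then have h: "4 * (K - 1) * c < 3 * (c+1) * K" by (simp add: mult_less_cancel2)
    obtain K' where K': "K = K' + 16" using K by (metis add.commute le_add_diff_inverse)
    have m: "K' * 4 \<le> K' * c" using c by simp
    show False using h c m unfolding K' by (simp add: algebra_simps)
  next
    case 3
    have "(K - 1) * (c * PB) \<le> (K - 1) * B" using B1 by simp
    also have "\<dots> = 3 * A" using eq by simp
    also have "\<dots> < 3 * ((c+1) * PA)" using A2 by simp
    finally have "16 * ((K - 1) * (c * PB)) < 16 * (3 * ((c+1) * PA))" by simp
    also have "\<dots> = 3 * (c+1) * (16 * PA)" by (simp add: algebra_simps)
    also have "\<dots> \<le> 3 * (c+1) * (K * PB)" using 3 by simp
    finally have "(16 * (K - 1) * c) * PB < (3 * (c+1) * K) * PB" by (simp add: ac_simps)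
    then have h: "16 * (K - 1) * c < 3 * (c+1) * K" by (simp add: mult_less_cancel2)
    obtain K' where K': "K = K' + 16" using K by (metis add.commute le_add_diff_inverse)
    have m: "K' * 4 \<le> K' * c" using c by simp
    show False using h c m unfolding K' by (simp add: algebra_simps)
  qed
qed


lemma div_bounds:
  fixes X P :: nat
  assumes "P > 0"
  shows "X div P * P \<le> X" "X < (X div P + 1) * P"
proof -
  have e: "X = X div P * P + X mod P" by simp
  have "X mod P < P" using assms by simp
  then show "X div P * P \<le> X" "X < (X div P + 1) * P" using e by (simp_all, linarith)
qed

lemma key:
  fixes N k A B :: nat
  assumes N: "3 * N + 1 = 4^k" "k \<ge> 2" and aA: "antipalindromic A" and aB: "antipalindromic B"
    and AB: "A = N * B"
  shows "B = 2"
proof -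
  obtain LB where LB: "even LB" "LB \<ge> 2" "2^(LB-1) \<le> B" "B < 2^LB"
    and hB: "\<forall>i<LB. B div 2^i mod 2 + B div 2^(LB-1-i) mod 2 = 1"
    using antipal_D[OF aB] by blast
  obtain LA where LA: "even LA" "LA \<ge> 2" "2^(LA-1) \<le> A" "A < 2^LA"
    and hA: "\<forall>i<LA. A div 2^i mod 2 + A div 2^(LA-1-i) mod 2 = 1"
    using antipal_D[OF aA] by blast
  show ?thesis
  proof (cases "LB = 2")
    case True
    then have b: "2 \<le> B" "B < 4" using LB by auto
    have "B div 2^0 mod 2 + B div 2^(LB-1-0) mod 2 = 1" using hB[rule_format, of 0] LB by simp
    then have "B mod 2 + B div 2 mod 2 = 1" using True by simp
    moreover have "B = 2 \<or> B = 3" using b by auto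
    ultimately show ?thesis by auto
  next
    case False
    then have LB4: "LB \<ge> 4" using LB ev4 by blast
    have "(4::nat)^2 \<le> 4^k" using N(2) by (intro power_increasing) auto
    then have K16: "(4::nat)^k \<ge> 16" by simp
    obtain k' where k': "k = k' + 2" using N(2) by (metis add.commute le_add_diff_inverse)
    have "(4::nat)^k = 16 * 4^k'" unfolding k' by (simp add: power_add)
    then have "16 dvd (3 * N + 1)" using N(1) by (metis dvd_triv_left)
    then have N5: "N mod 8 = 5" by (rule n5)
    have "(2::nat)^3 \<le> 2^(LB-1)" using LB4 by (intro power_increasing) auto
    then have B8: "B \<ge> 8" using LB by simp
    have N1: "N \<ge> 1" using N5 by (cases N) auto
    have "B \<le> A" unfolding AB using N1 by simp
    then have A8: "A \<ge> 8" using B8 by simp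
    have LA4: "LA \<ge> 4"
    proof (rule ccontr)
      assume "\<not> LA \<ge> 4"
      then have "LA = 2" using LA ev4 by blast
      then show False using A8 LA by simp
    qed
    have tb: "B div 2^(LB-1) mod 2 = 1" using top_bit LB by auto
    have ta: "A div 2^(LA-1) mod 2 = 1" using top_bit LA by auto
    have "B div 2^0 mod 2 + B div 2^(LB-1-0) mod 2 = 1" using hB[rule_format, of 0] LB by simp
    then have "B mod 2 = 0" using tb by simp
    then have evB: "even B" by (simp add: even_iff_mod_2_eq_zero)
    have "A mod 8 = ((N mod 8) * (B mod 8)) mod 8" using AB by (simp add: mod_mult_eq)
    also have "\<dots> = (5 * (B mod 8)) mod 8" using N5 by simp
    also have "\<dots> = B mod 8" using evB by (rule m5)
    finally have m8: "A mod 8 = B mod 8" .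
    have b1: "A div 2 mod 2 = B div 2 mod 2" using m8 d2[of A] d2[of B] by simp
    have b2: "A div 4 mod 2 = B div 4 mod 2" using m8 d4[of A] d4[of B] by simp
    have eB1: "LB - 1 - 1 = LB - 2" "LB - 1 - 2 = LB - 3" by arith+
    have eA1: "LA - 1 - 1 = LA - 2" "LA - 1 - 2 = LA - 3" by arith+
    have hB1: "B div 2 mod 2 + B div 2^(LB-2) mod 2 = 1"
      using hB[rule_format, of 1] LB4 eB1 by simp
    have hB2: "B div 4 mod 2 + B div 2^(LB-3) mod 2 = 1"
      using hB[rule_format, of 2] LB4 eB1 by simp
    have hA1: "A div 2 mod 2 + A div 2^(LA-2) mod 2 = 1"
      using hA[rule_format, of 1] LA4 eA1 by simp
    have hA2: "A div 4 mod 2 + A div 2^(LA-3) mod 2 = 1"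
      using hA[rule_format, of 2] LA4 eA1 by simp
    have tB: "B div 2^(LB-3) = 4*(B div 2^(LB-1) mod 2) + 2*(B div 2^(LB-2) mod 2) + B div 2^(LB-3) mod 2"
      using top3[of B LB] LB(4) LB4 by linarith
    have tA: "A div 2^(LA-3) = 4*(A div 2^(LA-1) mod 2) + 2*(A div 2^(LA-2) mod 2) + A div 2^(LA-3) mod 2"
      using top3[of A LA] LA(4) LA4 by linarith
    have cB: "B div 2^(LB-3) + 2 * (B div 2 mod 2) + B div 4 mod 2 = 7"
      using tB tb hB1 hB2 by linarith
    have cA: "A div 2^(LA-3) + 2 * (B div 2 mod 2) + B div 4 mod 2 = 7"
      using tA ta hA1 hA2 b1 b2 by linarith
    define c where "c = B div 2^(LB-3)"
    have "B div 2 mod 2 \<le> 1" "B div 4 mod 2 \<le> 1" by simp_all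
    then have c47: "4 \<le> c" "c \<le> 7" unfolding c_def using cB by linarith+
    have cA': "A div 2^(LA-3) = c" using cA cB c_def by linarith
    have B1: "c * 2^(LB-3) \<le> B" and B2: "B < (c+1) * 2^(LB-3)"
      using div_bounds[of "2^(LB-3)" B] unfolding c_def by auto
    have A1: "c * 2^(LA-3) \<le> A" and A2: "A < (c+1) * 2^(LA-3)"
      using div_bounds[of "2^(LA-3)" A] cA' by auto
    have N3: "3 * N = 4^k - 1" using N(1) by linarith
    have "3 * A = (3 * N) * B" unfolding AB by simp
    then have eq: "3 * A = (4^k - 1) * B" unfolding N3 .
    have K: "(4::nat)^k = 2^(2*k)" by (simp add: power_mult)
    have cs: "LA - 3 \<ge> LB - 3 + 2*k \<or> LA - 3 + 2 = LB - 3 + 2*k \<or> LA - 3 + 4 \<le> LB - 3 + 2*k"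
      using csl LA(1) LB(1) LA4 LB4 by blast
    have "(2::nat)^(LA-3) \<ge> 4^k * 2^(LB-3) \<or> 4 * 2^(LA-3) = 4^k * (2::nat)^(LB-3) \<or>
          16 * 2^(LA-3) \<le> 4^k * (2::nat)^(LB-3)"
    proof -
      have K2: "(4::nat)^k * 2^(LB-3) = 2^(LB - 3 + 2*k)" unfolding K by (simp add: power_add)
      consider "LA - 3 \<ge> LB - 3 + 2*k" | "LA - 3 + 2 = LB - 3 + 2*k" | "LA - 3 + 4 \<le> LB - 3 + 2*k"
        using cs by blast
      then show ?thesis
      proof cases
        case 1
        then have "(2::nat)^(LB - 3 + 2*k) \<le> 2^(LA-3)" by (intro power_increasing) auto
        then show ?thesis unfolding K2 by blast
      next
        case 2
        have "(4::nat) * 2^(LA-3) = 2^(LA - 3 + 2)" by (simp add: power_add)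
        also have "\<dots> = 2^(LB - 3 + 2*k)" using 2 by simp
        finally show ?thesis unfolding K2 by blast
      next
        case 3
        have "(16::nat) * 2^(LA-3) = 2^(LA - 3 + 4)" by (simp add: power_add)
        also have "\<dots> \<le> 2^(LB - 3 + 2*k)" using 3 by (intro power_increasing) auto
        finally show ?thesis unfolding K2 by blast
      qed
    qed
    then show ?thesis using cineq[OF c47 K16 B1 B2 A1 A2 eq] by blast
  qed
qed

fun g :: "nat \<Rightarrow> nat" where
  "g 0 = 0"
| "g (Suc k) = 4 * g k + 1"

lemma g_eq: "3 * g k + 1 = 4^k" by (induction k) auto

lemma g_ge: "g k \<ge> k" by (induction k) auto

lemma g_bits: "i < 2*k \<Longrightarrow> (2 * g k) div 2^i mod 2 = i mod 2"
proof (induction k arbitrary: i)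
  case 0 then show ?case by simp
next
  case (Suc k)
  have e: "2 * g (Suc k) = 4 * (2 * g k) + 2" by simp
  show ?case
  proof (cases i)
    case 0 then show ?thesis using e by simp
  next
    case (Suc i')
    show ?thesis
    proof (cases i')
      case 0
      have "(4 * (2 * g k) + 2) div 2 = 2 * (2 * g k) + 1" by simp
      have "odd (2 * (2 * g k) + 1)" by simp
      then have "(2 * (2 * g k) + 1) mod 2 = 1" using odd_iff_mod_2_eq_one by blast
      then show ?thesis using e Suc 0 by simp
    next
      case (Suc j)
      have ij: "i = j + 2" using Suc \<open>i = Suc i'\<close> by simp
      have "(2 * g (Suc k)) div 2^i = (4 * (2 * g k) + 2) div 4 div 2^j"
        using e ij by (simp add: div_mult2_eq power_add mult.commute)
      also have "(4 * (2 * g k) + 2) div 4 = 2 * g k" by simp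
      finally have "(2 * g (Suc k)) div 2^i = 2 * g k div 2^j" .
      moreover have "j < 2*k" using Suc.prems ij by simp
      ultimately show ?thesis using Suc.IH[of j] ij by simp
    qed
  qed
qed

lemma g_anti: "k \<ge> 1 \<Longrightarrow> antipalindromic (2 * g k)"
proof -
  assume k: "k \<ge> 1"
  have g1: "g k \<ge> 1" using g_ge[of k] k by simp
  obtain k' where k': "k = Suc k'" using k by (cases k) auto
  have p: "(2::nat)^(2*k) = 2 * 2^(2*k-1)" unfolding k' by simp
  have q: "(2::nat)^(2*k) = 3 * g k + 1" using g_eq[of k] by (simp add: power_mult)
  show ?thesis
  proof (rule antipal_I[of "2*k"])
    show "even (2*k)" by simp
    show "2 \<le> 2*k" using k by simp
    show "2^(2*k-1) \<le> 2 * g k" using p q g1 by linarith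
    show "2 * g k < 2^(2*k)" using q by linarith
    show "\<forall>i<2*k. 2 * g k div 2^i mod 2 + 2 * g k div 2^(2*k-1-i) mod 2 = 1"
    proof (intro allI impI)
      fix i assume i: "i < 2*k"
      have "2 * g k div 2^i mod 2 = i mod 2" using g_bits i by simp
      moreover have "2 * g k div 2^(2*k-1-i) mod 2 = (2*k-1-i) mod 2" using g_bits i by simp
      moreover have "i mod 2 + (2*k-1-i) mod 2 = (1::nat)" using i by (rule pm)
      ultimately show "2 * g k div 2^i mod 2 + 2 * g k div 2^(2*k-1-i) mod 2 = 1" by simp
    qed
  qed
qed

lemma inf_g:
  assumes "\<And>k. k \<ge> 2 \<Longrightarrow> g k \<in> S"
  shows "infinite S"
proof
  assume "finite S"
  then obtain m where m: "\<forall>n\<in>S. n \<le> m" unfolding finite_nat_set_iff_bounded_le by blast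
  have "g (m+2) \<in> S" by (rule assms) simp
  then have "g (m+2) \<le> m" using m by blast
  moreover have "g (m+2) \<ge> m+2" by (rule g_ge)
  ultimately show False by simp
qed

theorem theorem22:
  shows "infinite {N :: nat. N > 0 \<and>
           (\<exists>!p :: nat \<times> nat. antipalindromic (fst p) \<and> antipalindromic (snd p)
                 \<and> fst p = N * snd p)}"
proof -
  let ?S = "{N :: nat. N > 0 \<and>
           (\<exists>!p :: nat \<times> nat. antipalindromic (fst p) \<and> antipalindromic (snd p)
                 \<and> fst p = N * snd p)}"
  have mem: "g k \<in> ?S" if k: "k \<ge> 2" for k
  proof -
    let ?N = "g k"
    have a2: "antipalindromic 2" using g_anti[of 1] by simp
    have aN: "antipalindromic (?N * 2)" using g_anti[of k] k by (simp add: mult.commute)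
    have "\<exists>!p :: nat \<times> nat. antipalindromic (fst p) \<and> antipalindromic (snd p) \<and> fst p = ?N * snd p"
    proof (rule ex1I[of _ "(?N * 2, 2)"])
      show "antipalindromic (fst (?N * 2, 2)) \<and> antipalindromic (snd (?N * 2, 2::nat))
            \<and> fst (?N * 2, 2) = ?N * snd (?N * 2, 2::nat)" using a2 aN by simp
    next
      fix p :: "nat \<times> nat"
      assume h: "antipalindromic (fst p) \<and> antipalindromic (snd p) \<and> fst p = ?N * snd p"
      have "snd p = 2" using key[OF g_eq k] h by blast
      then show "p = (?N * 2, 2)" using h by (simp add: prod_eq_iff)
    qed
    moreover have "?N > 0" using g_ge[of k] k by simp
    ultimately show ?thesis by simp
  qed
  show ?thesis by (rule inf_g) (erule mem)
qed

end
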